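(* Let $L\in\mathbb{N}$, $\alpha>0$, and let $\widetilde{ALG}$ be an online block packing algorithm with the following guarantee for capacities $\tilde B=(\tilde B_j)$: on every instance with $\tilde q_{\max}:=\max_{i,j}w_{ij}/\tilde B_j\le\alpha$, its output $\tilde x$ has average block size $\tilde B$ with slackness $\tilde\Delta$, and for every horizon $\tilde T$ and every allocation $\tilde y$ respecting per-block limits $\tilde B_j$, $SW_{[1:\tilde T+\tilde\Gamma]}(\tilde x)\ge\tilde\lambda\,SW_{[1:\tilde T]}(\tilde y)$. Let $B_j=\tilde B_j/L$. Then on every instance with $q_{\max}:=\max_{i,j}w_{ij}/B_j\le\alpha L$, the batching algorithm with parameter $L$ using $\widetilde{ALG}$ as oracle outputs an allocation $x$ of average block size $B=(B_j)$ with slackness $\Delta=(\tilde\Delta+1)L$ such that for every horizon $T$ and every allocation $y$ respecting per-block limits $B_j$, $$SW_{[1:T+\Gamma]}(x)\ge(1-\rho_{\max})^{L-1}\tilde\lambda\,SW_{[1:T]}(y),\qquad\Gamma=(\tilde\Gamma+1)L,$$ where $\rho_{\max}=\max_i\rho_i$. This holds both when the comparison allocations $\tilde y,y$ range over integral allocations and when they range over fractional allocations.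
   Context: Online block packing: $m$ resources; transactions $i$ with arrival time $a_i\in\{1,2,\dots\}$, base value $v_i\ge0$, discount $\rho_i\in[0,1]$, demand $w_i\in\mathbb{R}_+^m$; value in block $t\ge a_i$ is $v_i^t=v_i(1-\rho_i)^{t-a_i}$. An allocation is $x=\{x_i^t\}$ with $x_i^t\in[0,1]$ ($\{0,1\}$ if integral), $x_i^t=0$ for $t<a_i$, $\sum_tx_i^t\le1$; it respects per-block limits $B_j$ if $\sum_iw_{ij}x_i^t\le B_j$ for all $t,j$; it has average block size $B$ with slackness $\Delta$ if for all $T_0,K\ge1$ and $j$, $\sum_{t=T_0}^{T_0+K-1}\sum_ix_i^tw_{ij}\le(K+\Delta)B_j$. $SW_{[1:T]}(x)=\sum_{t=1}^T\sum_ix_i^tv_i^t$. An online algorithm decides block $t$ using only transactions with $a_i\le t$. Batching algorithm with parameter $L$: for each block $t$, if $t$ is not a multiple of $L$ the block is empty ($x_i^t=0$ for all $i$); if $t=\tilde tL$, the batch $\tilde A_{\tilde t}=\{i:t-L<a_i\le t\}$ is fed to $\widetilde{ALG}$ as the transactions arriving at its time step $\tilde t$, where transaction $i$ is given base value $\tilde v_i=v_i(1-\rho_i)^{\tilde tL-a_i}$, discount factor $\tilde\rho_i=1-(1-\rho_i)^L$ and the same demand $w_i$; $\widetilde{ALG}$'s block $\tilde t$ output $\tilde x_i^{\tilde t}$ is used as $x_i^t=\tilde x_i^{\tilde t}$. *)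

theory Defs
  imports Main "HOL.Real"
begin

record txn =
  arr  :: nat
  val  :: real
  disc :: real
  dem  :: "nat \<Rightarrow> real"

text \<open>An instance is a finite set A of transaction identifiers together with
  their attributes tx. An algorithm maps an instance to an allocation
  x i t (transaction i, block t).\<close>
type_synonym 'i alg = "'i set \<Rightarrow> ('i \<Rightarrow> txn) \<Rightarrow> 'i \<Rightarrow> nat \<Rightarrow> real"

definition wf_instance :: "nat \<Rightarrow> 'i set \<Rightarrow> ('i \<Rightarrow> txn) \<Rightarrow> bool" where
  "wf_instance m A tx \<longleftrightarrow> finite A \<and>
     (\<forall>i\<in>A. arr (tx i) \<ge> 1 \<and> val (tx i) \<ge> 0 \<and> 0 \<le> disc (tx i) \<and> disc (tx i) \<le> 1 \<and>
        (\<forall>j<m. dem (tx i) j \<ge> 0))"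

definition qmax_le :: "nat \<Rightarrow> (nat \<Rightarrow> real) \<Rightarrow> 'i set \<Rightarrow> ('i \<Rightarrow> txn) \<Rightarrow> real \<Rightarrow> bool" where
  "qmax_le m B A tx a \<longleftrightarrow> (\<forall>i\<in>A. \<forall>j<m. dem (tx i) j / B j \<le> a)"

definition vt :: "txn \<Rightarrow> nat \<Rightarrow> real" where
  "vt \<tau> t = val \<tau> * (1 - disc \<tau>) ^ (t - arr \<tau>)"

definition SW :: "'i set \<Rightarrow> ('i \<Rightarrow> txn) \<Rightarrow> ('i \<Rightarrow> nat \<Rightarrow> real) \<Rightarrow> nat \<Rightarrow> real" where
  "SW A tx x T = (\<Sum>t\<in>{1..T}. \<Sum>i\<in>A. x i t * vt (tx i) t)"

text \<open>Allocation; integral if integ is True, fractional otherwise.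
  The condition sum over t of x i t \<le> 1 is stated via all partial sums.\<close>
definition is_alloc :: "bool \<Rightarrow> 'i set \<Rightarrow> ('i \<Rightarrow> txn) \<Rightarrow> ('i \<Rightarrow> nat \<Rightarrow> real) \<Rightarrow> bool" where
  "is_alloc integ A tx x \<longleftrightarrow>
     (\<forall>i\<in>A. (\<forall>t. 0 \<le> x i t \<and> x i t \<le> 1 \<and> (integ \<longrightarrow> x i t \<in> {0, 1})
                  \<and> (t < arr (tx i) \<longrightarrow> x i t = 0))
          \<and> (\<forall>T. (\<Sum>t\<le>T. x i t) \<le> 1))"

definition respects_limits :: "nat \<Rightarrow> (nat \<Rightarrow> real) \<Rightarrow> 'i set \<Rightarrow> ('i \<Rightarrow> txn) \<Rightarrow> ('i \<Rightarrow> nat \<Rightarrow> real) \<Rightarrow> bool" where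
  "respects_limits m B A tx x \<longleftrightarrow> (\<forall>t. \<forall>j<m. (\<Sum>i\<in>A. dem (tx i) j * x i t) \<le> B j)"

definition avg_block_size :: "nat \<Rightarrow> (nat \<Rightarrow> real) \<Rightarrow> real \<Rightarrow> 'i set \<Rightarrow> ('i \<Rightarrow> txn) \<Rightarrow> ('i \<Rightarrow> nat \<Rightarrow> real) \<Rightarrow> bool" where
  "avg_block_size m B \<Delta> A tx x \<longleftrightarrow>
     (\<forall>T0 K j. T0 \<ge> 1 \<longrightarrow> K \<ge> 1 \<longrightarrow> j < m \<longrightarrow>
        (\<Sum>t\<in>{T0..<T0+K}. \<Sum>i\<in>A. x i t * dem (tx i) j) \<le> (real K + \<Delta>) * B j)"

definition online :: "'i alg \<Rightarrow> bool" where
  "online ALG \<longleftrightarrow> (\<forall>A tx A' tx' t.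
     {i\<in>A. arr (tx i) \<le> t} = {i\<in>A'. arr (tx' i) \<le> t} \<and>
     (\<forall>i\<in>{i\<in>A. arr (tx i) \<le> t}. tx i = tx' i) \<longrightarrow>
     (\<forall>i\<in>{i\<in>A. arr (tx i) \<le> t}. ALG A tx i t = ALG A' tx' i t))"

definition rho_max :: "'i set \<Rightarrow> ('i \<Rightarrow> txn) \<Rightarrow> real" where
  "rho_max A tx = Max (insert 0 ((\<lambda>i. disc (tx i)) ` A))"

text \<open>Batch index of arrival a: the t~ with t~L - L < a \<le> t~L.\<close>
definition batch_idx :: "nat \<Rightarrow> nat \<Rightarrow> nat" where
  "batch_idx L a = (a + L - 1) div L"

definition batch_txn :: "nat \<Rightarrow> txn \<Rightarrow> txn" where
  "batch_txn L \<tau> = \<tau>\<lparr> arr := batch_idx L (arr \<tau>),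
      val := val \<tau> * (1 - disc \<tau>) ^ (batch_idx L (arr \<tau>) * L - arr \<tau>),
      disc := 1 - (1 - disc \<tau>) ^ L \<rparr>"

definition batching :: "nat \<Rightarrow> 'i alg \<Rightarrow> 'i alg" where
  "batching L ALG A tx = (\<lambda>i t. if 0 < t \<and> L dvd t
      then ALG A (\<lambda>k. batch_txn L (tx k)) i (t div L) else 0)"

end

theory Submission
  imports Defs
begin

lemma bidx:
  assumes "L \<ge> 1"
  shows "a \<le> batch_idx L a * L" "batch_idx L a * L < a + L"
proof -
  let ?b = "batch_idx L a"
  have e: "?b * L + (a + L - 1) mod L = a + L - 1"
    unfolding batch_idx_def by (rule div_mult_mod_eq)
  have "(a + L - 1) mod L < L" using assms by simp
  then show "a \<le> ?b * L" using e assms by linarith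
  show "?b * L < a + L" using e assms by linarith
qed

lemma bidx_pos: "L \<ge> 1 \<Longrightarrow> a \<ge> 1 \<Longrightarrow> batch_idx L a \<ge> 1"
  using bidx(1)[of L a] by (cases "batch_idx L a") auto

lemma bidx_lt:
  assumes "L \<ge> 1"
  shows "(k * L < a) = (k < batch_idx L a)"
proof
  assume "k * L < a"
  then have "k * L < batch_idx L a * L" using bidx(1)[OF assms, of a] by linarith
  then show "k < batch_idx L a" by simp
next
  assume "k < batch_idx L a"
  then have "Suc k \<le> batch_idx L a" by simp
  then have "Suc k * L \<le> batch_idx L a * L" by (rule mult_le_mono1)
  then show "k * L < a" using bidx(2)[OF assms, of a] by simp
qed

lemma vt_batch:
  assumes "L \<ge> 1" "batch_idx L (arr \<tau>) \<le> k"
  shows "vt (batch_txn L \<tau>) k = vt \<tau> (k * L)"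
proof -
  let ?b = "batch_idx L (arr \<tau>)" and ?a = "arr \<tau>"
  obtain d where d: "k = ?b + d" using assms(2) le_Suc_ex by blast
  have ba: "?a \<le> ?b * L" using bidx(1)[OF assms(1)] .
  have ex: "k * L - ?a = (?b * L - ?a) + L * d" using ba d by (simp add: algebra_simps)
  have p: "(1 - disc \<tau>) ^ (k * L - ?a) = (1 - disc \<tau>) ^ (?b * L - ?a) * ((1 - disc \<tau>) ^ L) ^ d"
    by (simp only: ex power_add power_mult)
  show ?thesis
    unfolding vt_def batch_txn_def using d p by simp
qed

lemma sum_mult_L:
  fixes f :: "nat \<Rightarrow> real"
  assumes "L \<ge> 1" "finite S"
  shows "(\<Sum>t\<in>S. if 0 < t \<and> L dvd t then f t else 0) = (\<Sum>k\<in>{k. 0 < k \<and> k * L \<in> S}. f (k * L))"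
proof -
  have "(\<Sum>t\<in>S. if 0 < t \<and> L dvd t then f t else 0) = (\<Sum>t\<in>{t\<in>S. 0 < t \<and> L dvd t}. f t)"
    by (simp add: sum.inter_filter assms)
  also have "{t\<in>S. 0 < t \<and> L dvd t} = (\<lambda>k. k * L) ` {k. 0 < k \<and> k * L \<in> S}"
  proof
    show "{t\<in>S. 0 < t \<and> L dvd t} \<subseteq> (\<lambda>k. k * L) ` {k. 0 < k \<and> k * L \<in> S}"
    proof
      fix t assume "t \<in> {t\<in>S. 0 < t \<and> L dvd t}"
      then obtain k where "t = L * k" "t \<in> S" "0 < t" by auto
      then show "t \<in> (\<lambda>k. k * L) ` {k. 0 < k \<and> k * L \<in> S}"
        by (auto simp: mult.commute intro!: image_eqI[where x = k])
    qed
  qed (use assms(1) in auto)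
  also have "(\<Sum>t\<in>(\<lambda>k. k * L) ` {k. 0 < k \<and> k * L \<in> S}. f t) = (\<Sum>k\<in>{k. 0 < k \<and> k * L \<in> S}. f (k * L))"
    using assms(1) by (subst sum.reindex) (auto simp: inj_on_def)
  finally show ?thesis .
qed

lemma sum_blocks:
  fixes g :: "nat \<Rightarrow> real"
  shows "(\<Sum>k\<le>K. \<Sum>t\<in>{k*L-L<..k*L}. g t) = (\<Sum>t\<in>{0<..K*L}. g t)"
proof (induction K)
  case 0
  then show ?case by simp
next
  case (Suc K)
  have u: "{0<..Suc K * L} = {0<..K*L} \<union> {K*L<..K*L+L}" by auto
  have "(\<Sum>t\<in>{0<..Suc K * L}. g t) = (\<Sum>t\<in>{0<..K*L}. g t) + (\<Sum>t\<in>{K*L<..K*L+L}. g t)"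
    unfolding u by (rule sum.union_disjoint) auto
  then show ?case using Suc by (simp add: add.commute)
qed

lemma sum01:
  fixes g :: "nat \<Rightarrow> real"
  assumes "finite S" "\<forall>t\<in>S. g t \<in> {0,1}" "sum g S \<le> 1"
  shows "sum g S \<in> {0,1}"
proof (cases "\<exists>t\<in>S. g t = 1")
  case True
  then obtain t where t: "t \<in> S" "g t = 1" by blast
  have "g t \<le> sum g S" using assms t by (intro member_le_sum) auto
  then show ?thesis using t assms by auto
next
  case False
  then have "\<forall>t\<in>S. g t = 0" using assms(2) by auto
  then show ?thesis by simp
qed

lemma SW_mono:
  assumes "\<forall>i\<in>A. \<forall>t. 0 \<le> x i t * vt (tx i) t" "T1 \<le> T2" "finite A"
  shows "SW A tx x T1 \<le> SW A tx x T2"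
  unfolding SW_def using assms by (intro sum_mono2) (auto intro!: sum_nonneg)

lemma vt_nn: "0 \<le> val \<tau> \<Longrightarrow> disc \<tau> \<le> 1 \<Longrightarrow> 0 \<le> vt \<tau> t"
  unfolding vt_def by simp

theorem lemma9:
  fixes ALGt :: "'i alg" and m L :: nat and alpha Delt lamt :: real and Gamt :: nat
    and Bt :: "nat \<Rightarrow> real" and integ :: bool
  assumes L_pos: "L \<ge> 1" and alpha_pos: "alpha > 0"
    and Bt_pos: "\<forall>j<m. Bt j > 0"
    and alg_online: "online ALGt"
    and alg_alloc: "\<forall>A tx. wf_instance m A tx \<longrightarrow> is_alloc False A tx (ALGt A tx)"
    and alg_guarantee: "\<forall>A tx. wf_instance m A tx \<and> qmax_le m Bt A tx alpha \<longrightarrow>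
        avg_block_size m Bt Delt A tx (ALGt A tx) \<and>
        (\<forall>T y. is_alloc integ A tx y \<and> respects_limits m Bt A tx y \<longrightarrow>
           SW A tx (ALGt A tx) (T + Gamt) \<ge> lamt * SW A tx y T)"
  shows "\<forall>A tx. wf_instance m A tx \<and> qmax_le m (\<lambda>j. Bt j / real L) A tx (alpha * real L) \<longrightarrow>
      is_alloc False A tx (batching L ALGt A tx) \<and>
      avg_block_size m (\<lambda>j. Bt j / real L) ((Delt + 1) * real L) A tx (batching L ALGt A tx) \<and>
      (\<forall>T y. is_alloc integ A tx y \<and> respects_limits m (\<lambda>j. Bt j / real L) A tx y \<longrightarrow>
         SW A tx (batching L ALGt A tx) (T + (Gamt + 1) * L)
           \<ge> (1 - rho_max A tx) ^ (L - 1) * lamt * SW A tx y T)"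
proof (intro allI impI)
  fix A and tx :: "'i \<Rightarrow> txn"
  assume H: "wf_instance m A tx \<and> qmax_le m (\<lambda>j. Bt j / real L) A tx (alpha * real L)"
  define tx' where "tx' = (\<lambda>k. batch_txn L (tx k))"
  define xt where "xt = ALGt A tx'"
  have xdef: "batching L ALGt A tx = (\<lambda>i t. if 0 < t \<and> L dvd t then xt i (t div L) else 0)"
    unfolding batching_def xt_def tx'_def by (rule refl)
  have wf: "wf_instance m A tx" using H by blast
  have fin: "finite A" using wf by (simp add: wf_instance_def)
  have arr': "\<And>i. arr (tx' i) = batch_idx L (arr (tx i))" by (simp add: tx'_def batch_txn_def)
  have dem': "\<And>i. dem (tx' i) = dem (tx i)" by (simp add: tx'_def batch_txn_def)
  have wf1: "\<And>i. i \<in> A \<Longrightarrow> arr (tx i) \<ge> 1 \<and> val (tx i) \<ge> 0 \<and> 0 \<le> disc (tx i) \<and> disc (tx i) \<le> 1 \<and>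
        (\<forall>j<m. dem (tx i) j \<ge> 0)" using wf by (simp add: wf_instance_def)
  have wf': "wf_instance m A tx'"
    unfolding wf_instance_def
  proof (intro conjI[OF fin] ballI)
    fix i assume i: "i \<in> A"
    note w = wf1[OF i]
    have a: "0 \<le> 1 - disc (tx i)" "1 - disc (tx i) \<le> 1" using w by auto
    have "(1 - disc (tx i)) ^ L \<le> 1" using a by (rule power_le_one)
    moreover have "0 \<le> (1 - disc (tx i)) ^ L" using a by simp
    ultimately show "1 \<le> arr (tx' i) \<and> 0 \<le> val (tx' i) \<and> 0 \<le> disc (tx' i) \<and> disc (tx' i) \<le> 1 \<and>
        (\<forall>j<m. 0 \<le> dem (tx' i) j)"
      using w bidx_pos[OF L_pos, of "arr (tx i)"] a
      by (simp add: tx'_def batch_txn_def)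
  qed
  have qm': "qmax_le m Bt A tx' alpha"
    unfolding qmax_le_def
  proof (intro ballI allI impI)
    fix i j assume i: "i \<in> A" and j: "j < m"
    have "dem (tx i) j / (Bt j / real L) \<le> alpha * real L"
      using H i j by (simp add: qmax_le_def)
    moreover have "dem (tx i) j / (Bt j / real L) = (dem (tx i) j / Bt j) * real L"
      using L_pos by simp
    ultimately have "(dem (tx i) j / Bt j) * real L \<le> alpha * real L" by simp
    moreover have "real L > 0" using L_pos by simp
    ultimately have "dem (tx i) j / Bt j \<le> alpha" by (metis mult_le_cancel_right_pos)
    then show "dem (tx' i) j / Bt j \<le> alpha" by (simp add: dem')
  qed
  have xt_alloc: "is_alloc False A tx' xt" using alg_alloc wf' by (simp add: xt_def)
  have G: "avg_block_size m Bt Delt A tx' xt \<and>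
        (\<forall>T y. is_alloc integ A tx' y \<and> respects_limits m Bt A tx' y \<longrightarrow>
           SW A tx' xt (T + Gamt) \<ge> lamt * SW A tx' y T)"
    using alg_guarantee wf' qm' by (simp add: xt_def)
  have vt': "\<And>i k. batch_idx L (arr (tx i)) \<le> k \<Longrightarrow> vt (tx' i) k = vt (tx i) (k * L)"
    unfolding tx'_def by (rule vt_batch[OF L_pos])
  have xt_nn: "\<And>i k. i \<in> A \<Longrightarrow> 0 \<le> xt i k" and xt_le1: "\<And>i k. i \<in> A \<Longrightarrow> xt i k \<le> 1"
    and xt_sum: "\<And>i K. i \<in> A \<Longrightarrow> (\<Sum>k\<le>K. xt i k) \<le> 1"
    using xt_alloc by (auto simp: is_alloc_def)
  have xt_zero: "\<And>i k. i \<in> A \<Longrightarrow> k < batch_idx L (arr (tx i)) \<Longrightarrow> xt i k = 0"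
    using xt_alloc by (auto simp: is_alloc_def arr')
  show "is_alloc False A tx (batching L ALGt A tx) \<and>
      avg_block_size m (\<lambda>j. Bt j / real L) ((Delt + 1) * real L) A tx (batching L ALGt A tx) \<and>
      (\<forall>T y. is_alloc integ A tx y \<and> respects_limits m (\<lambda>j. Bt j / real L) A tx y \<longrightarrow>
         SW A tx (batching L ALGt A tx) (T + (Gamt + 1) * L)
           \<ge> (1 - rho_max A tx) ^ (L - 1) * lamt * SW A tx y T)"
  proof (intro conjI)
    show "is_alloc False A tx (batching L ALGt A tx)"
      unfolding is_alloc_def
    proof
      fix i assume i: "i \<in> A"
      have z: "(if 0 < t \<and> L dvd t then xt i (t div L) else 0) = 0" if t: "t < arr (tx i)" for t
      proof (cases "0 < t \<and> L dvd t")
        case True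
        then have "t div L * L = t" by simp
        then have "t div L * L < arr (tx i)" using t by simp
        then have "t div L < batch_idx L (arr (tx i))" using bidx_lt[OF L_pos] by blast
        then show ?thesis using xt_zero[OF i] by simp
      qed auto
      have s: "(\<Sum>t\<le>T. if 0 < t \<and> L dvd t then xt i (t div L) else 0) \<le> 1" for T
      proof -
        have "(\<Sum>t\<le>T. if 0 < t \<and> L dvd t then xt i (t div L) else 0)
            = (\<Sum>k\<in>{k. 0 < k \<and> k * L \<in> {..T}}. xt i (k * L div L))"
          by (rule sum_mult_L[OF L_pos, where f = "\<lambda>t. xt i (t div L)"]) simp
        also have "\<dots> = (\<Sum>k\<in>{k. 0 < k \<and> k * L \<in> {..T}}. xt i k)" using L_pos by simp
        also have "\<dots> \<le> (\<Sum>k\<le>T. xt i k)"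
        proof (rule sum_mono2)
          show "{k. 0 < k \<and> k * L \<in> {..T}} \<subseteq> {..T}"
          proof
            fix k assume "k \<in> {k. 0 < k \<and> k * L \<in> {..T}}"
            then have "k * L \<le> T" by simp
            moreover have "k \<le> k * L" using L_pos by simp
            ultimately have "k \<le> T" by linarith
            then show "k \<in> {..T}" by simp
          qed
        qed (use xt_nn[OF i] in auto)
        also have "\<dots> \<le> 1" using xt_sum[OF i] .
        finally show ?thesis .
      qed
      show "(\<forall>t. 0 \<le> batching L ALGt A tx i t \<and> batching L ALGt A tx i t \<le> 1 \<and>
             (False \<longrightarrow> batching L ALGt A tx i t \<in> {0, 1}) \<and>
             (t < arr (tx i) \<longrightarrow> batching L ALGt A tx i t = 0)) \<and>
          (\<forall>T. (\<Sum>t\<le>T. batching L ALGt A tx i t) \<le> 1)"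
        unfolding xdef using z s xt_nn[OF i] xt_le1[OF i] by auto
    qed
    show "avg_block_size m (\<lambda>j. Bt j / real L) ((Delt + 1) * real L) A tx (batching L ALGt A tx)"
      unfolding avg_block_size_def
    proof (intro allI impI)
      fix T0 K j :: nat assume T0: "1 \<le> T0" and K: "1 \<le> K" and j: "j < m"
      define U where "U = (\<lambda>k. \<Sum>i\<in>A. xt i k * dem (tx i) j)"
      define S' where "S' = {k. 0 < k \<and> k * L \<in> {T0..<T0+K}}"
      define c where "c = (K - 1) div L + 1"
      define k0 where "k0 = (if S' = {} then 1 else Min S')"
      have U_nn: "0 \<le> U k" for k
        unfolding U_def using xt_nn wf1 j by (intro sum_nonneg) auto
      have finS: "finite S'"
      proof (rule finite_subset)
        show "S' \<subseteq> {..T0+K}"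
        proof
          fix k assume "k \<in> S'"
          then have "k * L < T0 + K" by (simp add: S'_def)
          moreover have "k \<le> k * L" using L_pos by simp
          ultimately have "k \<le> T0+K" by linarith
          then show "k \<in> {..T0+K}" by simp
        qed
      qed simp
      have k0: "1 \<le> k0"
      proof (cases "S' = {}")
        case False
        then have "Min S' \<in> S'" using finS by simp
        then show ?thesis using False by (simp add: k0_def S'_def)
      qed (simp add: k0_def)
      have c1: "1 \<le> c" by (simp add: c_def)
      have sub: "S' \<subseteq> {k0..<k0+c}"
      proof
        fix k assume k: "k \<in> S'"
        then have ne: "S' \<noteq> {}" by blast
        then have k0e: "k0 = Min S'" by (simp add: k0_def)
        have "k0 \<le> k" using k finS k0e by simp
        have "k0 \<in> S'" using ne finS k0e by simp
        then have a1: "T0 \<le> k0 * L" by (simp add: S'_def)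
        have a2: "k * L < T0 + K" using k by (simp add: S'_def)
        have "(k - k0) * L = k * L - k0 * L" by (simp add: diff_mult_distrib)
        then have "(k - k0) * L \<le> K - 1" using a1 a2 by linarith
        then have "k - k0 \<le> (K - 1) div L" using L_pos by (simp add: less_eq_div_iff_mult_less_eq)
        then show "k \<in> {k0..<k0+c}" using \<open>k0 \<le> k\<close> by (simp add: c_def)
      qed
      have "(\<Sum>t\<in>{T0..<T0+K}. \<Sum>i\<in>A. batching L ALGt A tx i t * dem (tx i) j)
          = (\<Sum>t\<in>{T0..<T0+K}. if 0 < t \<and> L dvd t then U (t div L) else 0)"
        by (intro sum.cong refl) (simp add: xdef U_def)
      also have "\<dots> = (\<Sum>k\<in>S'. U (k * L div L))"
        unfolding S'_def by (rule sum_mult_L[OF L_pos, where f = "\<lambda>t. U (t div L)"]) simp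
      also have "\<dots> = (\<Sum>k\<in>S'. U k)" using L_pos by simp
      also have "\<dots> \<le> (\<Sum>k\<in>{k0..<k0+c}. U k)"
        by (rule sum_mono2) (use sub U_nn in auto)
      also have "\<dots> \<le> (real c + Delt) * Bt j"
        using G k0 c1 j unfolding avg_block_size_def U_def by (simp add: dem')
      also have "\<dots> \<le> (real K + (Delt + 1) * real L) * (Bt j / real L)"
      proof -
        have "((K - 1) div L) * L \<le> K - 1" by (rule div_times_less_eq_dividend)
        moreover have "c * L = ((K - 1) div L) * L + L" by (simp add: c_def)
        ultimately have "c * L \<le> K + L" by linarith
        then have "real c * real L \<le> real K + real L" by (metis of_nat_add of_nat_le_iff of_nat_mult)
        then have "(real c + Delt) * real L \<le> real K + (Delt + 1) * real L" by (simp add: algebra_simps)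
        moreover have "0 \<le> Bt j / real L" using Bt_pos j by (simp add: less_imp_le)
        ultimately have "(real c + Delt) * real L * (Bt j / real L) \<le> (real K + (Delt + 1) * real L) * (Bt j / real L)"
          by (rule mult_right_mono)
        moreover have "(real c + Delt) * real L * (Bt j / real L) = (real c + Delt) * Bt j" using L_pos by simp
        ultimately show ?thesis by simp
      qed
      finally show "(\<Sum>t\<in>{T0..<T0+K}. \<Sum>i\<in>A. batching L ALGt A tx i t * dem (tx i) j)
          \<le> (real K + (Delt + 1) * real L) * (Bt j / real L)" .
    qed
    show "\<forall>T y. is_alloc integ A tx y \<and> respects_limits m (\<lambda>j. Bt j / real L) A tx y \<longrightarrow>
         SW A tx (batching L ALGt A tx) (T + (Gamt + 1) * L)
           \<ge> (1 - rho_max A tx) ^ (L - 1) * lamt * SW A tx y T"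
    proof (intro allI impI)
      fix T y assume Y: "is_alloc integ A tx y \<and> respects_limits m (\<lambda>j. Bt j / real L) A tx y"
      have y_nn: "\<And>i t. i \<in> A \<Longrightarrow> 0 \<le> y i t"
        and y_int: "\<And>i t. i \<in> A \<Longrightarrow> integ \<Longrightarrow> y i t \<in> {0,1}"
        and y_zero: "\<And>i t. i \<in> A \<Longrightarrow> t < arr (tx i) \<Longrightarrow> y i t = 0"
        and y_sum: "\<And>i T'. i \<in> A \<Longrightarrow> (\<Sum>t\<le>T'. y i t) \<le> 1"
        using Y by (auto simp: is_alloc_def)
      have y_lim: "\<And>t j. j < m \<Longrightarrow> (\<Sum>i\<in>A. dem (tx i) j * y i t) \<le> Bt j / real L"
        using Y by (auto simp: respects_limits_def)
      define I where "I = (\<lambda>k::nat. {k*L-L<..k*L})"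
      define yt where "yt = (\<lambda>i k. \<Sum>t\<in>I k. y i t)"
      have finI: "finite (I k)" for k by (simp add: I_def)
      have I_sub: "I k \<subseteq> {..k*L}" for k by (auto simp: I_def)
      have yt_le: "yt i k \<le> 1" if i: "i \<in> A" for i k
      proof -
        have "yt i k \<le> (\<Sum>t\<le>k*L. y i t)"
          unfolding yt_def by (rule sum_mono2) (use I_sub y_nn[OF i] in auto)
        also have "\<dots> \<le> 1" using y_sum[OF i] .
        finally show ?thesis .
      qed
      have yt_blocks: "(\<Sum>k\<le>K. yt i k) = (\<Sum>t\<in>{0<..K*L}. y i t)" for i K
        unfolding yt_def I_def by (rule sum_blocks)
      have yt_alloc: "is_alloc integ A tx' yt"
        unfolding is_alloc_def
      proof (intro ballI conjI allI impI)
        fix i k assume i: "i \<in> A"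
        show "0 \<le> yt i k" unfolding yt_def using y_nn[OF i] by (simp add: sum_nonneg)
        show "yt i k \<le> 1" using yt_le[OF i] .
        show "yt i k \<in> {0,1}" if "integ"
          unfolding yt_def using y_int[OF i that] yt_le[OF i] finI by (intro sum01) (auto simp: yt_def)
        show "yt i k = 0" if k: "k < arr (tx' i)"
        proof -
          have "k * L < arr (tx i)" using k bidx_lt[OF L_pos] by (simp add: arr')
          then have "\<forall>t\<in>I k. y i t = 0" using y_zero[OF i] I_sub by fastforce
          then show ?thesis by (simp add: yt_def)
        qed
      next
        fix i K assume i: "i \<in> A"
        have "(\<Sum>k\<le>K. yt i k) \<le> (\<Sum>t\<le>K*L. y i t)"
          unfolding yt_blocks by (rule sum_mono2) (use y_nn[OF i] in auto)
        also have "\<dots> \<le> 1" using y_sum[OF i] .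
        finally show "(\<Sum>k\<le>K. yt i k) \<le> 1" .
      qed
      have yt_lim: "respects_limits m Bt A tx' yt"
        unfolding respects_limits_def
      proof (intro allI impI)
        fix k j assume j: "j < m"
        have "(\<Sum>i\<in>A. dem (tx' i) j * yt i k) = (\<Sum>t\<in>I k. \<Sum>i\<in>A. dem (tx i) j * y i t)"
          unfolding yt_def dem' by (simp add: sum_distrib_left sum.swap[of _ "I k"])
        also have "\<dots> \<le> (\<Sum>t\<in>I k. Bt j / real L)"
          by (rule sum_mono) (rule y_lim[OF j])
        also have "\<dots> = real (card (I k)) * (Bt j / real L)" by simp
        also have "\<dots> \<le> real L * (Bt j / real L)"
        proof (rule mult_right_mono)
          have "card (I k) = k * L - (k * L - L)" by (simp add: I_def)
          then have "card (I k) \<le> L" by linarith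
          then show "real (card (I k)) \<le> real L" by simp
          show "0 \<le> Bt j / real L" using Bt_pos j by (simp add: less_imp_le)
        qed
        also have "\<dots> = Bt j" using L_pos by simp
        finally show "(\<Sum>i\<in>A. dem (tx' i) j * yt i k) \<le> Bt j" .
      qed
      define K where "K = T div L + 1"
      define N where "N = T + (Gamt + 1) * L"
      define r where "r = rho_max A tx"
      define c where "c = (1 - r) ^ (L - 1)"
      have r_ge: "\<And>i. i \<in> A \<Longrightarrow> disc (tx i) \<le> r"
        unfolding r_def rho_max_def using fin by (intro Max_ge) auto
      have r_in: "r \<in> insert 0 ((\<lambda>i. disc (tx i)) ` A)"
        unfolding r_def rho_max_def using fin by (intro Max_in) auto
      have r_le1: "r \<le> 1" using r_in wf1 by auto
      have c_nn: "0 \<le> c" unfolding c_def using r_le1 by simp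
      have vt_nn1: "\<And>i t. i \<in> A \<Longrightarrow> 0 \<le> vt (tx i) t" using wf1 vt_nn by blast
      have vt_nn2: "\<And>i t. i \<in> A \<Longrightarrow> 0 \<le> vt (tx' i) t" using wf' vt_nn
        by (auto simp: wf_instance_def)
      have TK: "T \<le> K * L"
      proof -
        have "T < (T div L + 1) * L" using L_pos
          by (metis One_nat_def Suc_le_lessD add.commute div_mult_mod_eq mod_less_divisor mult_Suc plus_1_eq_Suc add_less_cancel_left)
        then show ?thesis by (simp add: K_def)
      qed
      have key: "c * (y i t * vt (tx i) t) \<le> y i t * vt (tx' i) k"
        if i: "i \<in> A" and t: "t \<in> I k" for i t k
      proof (cases "y i t = 0")
        case True then show ?thesis by simp
      next
        case False
        then have ta: "arr (tx i) \<le> t" using y_zero[OF i] by (meson not_le)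
        have t1: "t \<le> k * L" and t2: "k * L < t + L" using t by (auto simp: I_def)
        have "\<not> k * L < arr (tx i)" using ta t1 by simp
        then have kb: "batch_idx L (arr (tx i)) \<le> k" using bidx_lt[OF L_pos] by (meson not_le)
        let ?d = "1 - disc (tx i)"
        have d0: "0 \<le> ?d" and d1: "?d \<le> 1" using wf1[OF i] by auto
        have ex: "k * L - arr (tx i) = (t - arr (tx i)) + (k * L - t)" using ta t1 by simp
        have "vt (tx' i) k = vt (tx i) (k * L)" using vt'[OF kb] .
        also have "\<dots> = vt (tx i) t * ?d ^ (k * L - t)"
          unfolding vt_def ex power_add by simp
        finally have v: "vt (tx' i) k = vt (tx i) t * ?d ^ (k * L - t)" .
        have "c \<le> ?d ^ (L - 1)" unfolding c_def
          using r_ge[OF i] r_le1 by (intro power_mono) auto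
        also have "?d ^ (L - 1) \<le> ?d ^ (k * L - t)"
          using t2 d0 d1 by (intro power_decreasing) auto
        finally have "c \<le> ?d ^ (k * L - t)" .
        then have "c * (y i t * vt (tx i) t) \<le> ?d ^ (k * L - t) * (y i t * vt (tx i) t)"
          using y_nn[OF i] vt_nn1[OF i] by (intro mult_right_mono) auto
        then show ?thesis using v by (simp add: algebra_simps)
      qed
      have stepA: "c * SW A tx y T \<le> SW A tx' yt K"
      proof -
        have "SW A tx y T \<le> SW A tx y (K * L)"
          using TK fin y_nn vt_nn1 by (intro SW_mono) auto
        also have "SW A tx y (K * L) = (\<Sum>t\<in>{0<..K*L}. \<Sum>i\<in>A. y i t * vt (tx i) t)"
        proof -
          have "{1..K*L} = {0<..K*L}" by auto
          then show ?thesis by (simp add: SW_def)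
        qed
        also have "\<dots> = (\<Sum>k\<le>K. \<Sum>t\<in>I k. \<Sum>i\<in>A. y i t * vt (tx i) t)"
          unfolding I_def by (rule sum_blocks[symmetric])
        finally have "c * SW A tx y T \<le> c * (\<Sum>k\<le>K. \<Sum>t\<in>I k. \<Sum>i\<in>A. y i t * vt (tx i) t)"
          using c_nn by (rule mult_left_mono)
        also have "\<dots> = (\<Sum>k\<le>K. \<Sum>t\<in>I k. \<Sum>i\<in>A. c * (y i t * vt (tx i) t))"
          by (simp add: sum_distrib_left)
        also have "\<dots> \<le> (\<Sum>k\<le>K. \<Sum>t\<in>I k. \<Sum>i\<in>A. y i t * vt (tx' i) k)"
          by (intro sum_mono key) auto
        also have "\<dots> = (\<Sum>k\<le>K. \<Sum>i\<in>A. yt i k * vt (tx' i) k)"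
          unfolding yt_def by (simp add: sum_distrib_right sum.swap[of _ "I _"])
        also have "\<dots> = (\<Sum>k\<in>{1..K}. \<Sum>i\<in>A. yt i k * vt (tx' i) k)"
          by (rule sum.mono_neutral_right) (auto simp: yt_def I_def)
        also have "\<dots> = SW A tx' yt K" by (simp add: SW_def)
        finally show ?thesis .
      qed
      have stepB: "lamt * SW A tx' yt K \<le> SW A tx' xt (K + Gamt)"
        using G yt_alloc yt_lim by blast
      have stepC: "SW A tx (batching L ALGt A tx) N = SW A tx' xt (K + Gamt)"
      proof -
        have "SW A tx (batching L ALGt A tx) N
            = (\<Sum>t\<in>{1..N}. if 0 < t \<and> L dvd t then (\<Sum>i\<in>A. xt i (t div L) * vt (tx i) t) else 0)"
          unfolding SW_def xdef by (intro sum.cong refl) auto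
        also have "\<dots> = (\<Sum>k\<in>{k. 0 < k \<and> k * L \<in> {1..N}}. \<Sum>i\<in>A. xt i (k * L div L) * vt (tx i) (k * L))"
          by (rule sum_mult_L[OF L_pos, where f = "\<lambda>t. \<Sum>i\<in>A. xt i (t div L) * vt (tx i) t"]) simp
        also have "{k. 0 < k \<and> k * L \<in> {1..N}} = {1..K + Gamt}"
        proof -
          have "(T + (Gamt + 1) * L) div L = (Gamt + 1) + T div L"
            using L_pos by (intro div_mult_self1) simp
          then have nd: "N div L = K + Gamt" by (simp add: N_def K_def)
          have "k * L \<le> N \<longleftrightarrow> k \<le> N div L" for k
            using L_pos by (simp add: less_eq_div_iff_mult_less_eq)
          then have a: "(k * L \<le> N) = (k \<le> K + Gamt)" for k using nd by simp
          have b: "0 < k \<Longrightarrow> 1 \<le> k * L" for k using L_pos by simp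
          show ?thesis
          proof (rule set_eqI)
            fix k
            show "k \<in> {k. 0 < k \<and> k * L \<in> {1..N}} \<longleftrightarrow> k \<in> {1..K + Gamt}"
              using a[of k] b[of k] by auto
          qed
        qed
        also have "(\<Sum>k\<in>{1..K + Gamt}. \<Sum>i\<in>A. xt i (k * L div L) * vt (tx i) (k * L))
            = (\<Sum>k\<in>{1..K + Gamt}. \<Sum>i\<in>A. xt i k * vt (tx' i) k)"
        proof (intro sum.cong refl)
          fix k i assume i: "i \<in> A"
          show "xt i (k * L div L) * vt (tx i) (k * L) = xt i k * vt (tx' i) k"
          proof (cases "k < batch_idx L (arr (tx i))")
            case True then show ?thesis using xt_zero[OF i] L_pos by simp
          next
            case False then show ?thesis using vt' L_pos by simp
          qed
        qed
        also have "\<dots> = SW A tx' xt (K + Gamt)" by (simp add: SW_def)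
        finally show ?thesis .
      qed
      have SWx_nn: "0 \<le> SW A tx' xt (K + Gamt)"
        unfolding SW_def using xt_nn vt_nn2 by (intro sum_nonneg) auto
      have SWy_nn: "0 \<le> SW A tx y T"
        unfolding SW_def using y_nn vt_nn1 by (intro sum_nonneg) auto
      have "c * lamt * SW A tx y T \<le> SW A tx' xt (K + Gamt)"
      proof (cases "0 \<le> lamt")
        case True
        have "c * lamt * SW A tx y T = lamt * (c * SW A tx y T)" by simp
        also have "\<dots> \<le> lamt * SW A tx' yt K" using stepA True by (rule mult_left_mono)
        also have "\<dots> \<le> SW A tx' xt (K + Gamt)" using stepB .
        finally show ?thesis .
      next
        case False
        then have "c * lamt * SW A tx y T \<le> 0" using c_nn SWy_nn
          by (simp add: mult_nonneg_nonneg mult_nonpos_nonneg mult_nonneg_nonpos)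
        then show ?thesis using SWx_nn by linarith
      qed
      then show "SW A tx (batching L ALGt A tx) (T + (Gamt + 1) * L)
           \<ge> (1 - rho_max A tx) ^ (L - 1) * lamt * SW A tx y T"
        using stepC by (simp add: N_def c_def r_def)
    qed
  qed
qed

end
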